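(* Let $n\ge 2$ and let $\mathcal{F}$ be a maximal coclique of $\Gamma_{2n}$. Let $B$ be an $n$-space of $\mathrm{PG}(2n,q)$ that occurs in a flag of $\mathcal{F}$. Then there exists $k\in\{1,\ldots,n+1\}$ such that the number of flags in $\mathcal{F}$ that contain $B$ is precisely $\begin{bmatrix}k\\ 1\end{bmatrix}_q$. Furthermore, this number is $\begin{bmatrix}n+1\\ 1\end{bmatrix}_q$ if and only if every flag $(A',B')\in \mathcal{F}$ satisfies $A'\cap B\neq \emptyset$.
   Context: $\mathrm{PG}(2n,q)$ is the projective space of projective dimension $2n$ over the field of order $q$; an $i$-space is a subspace of projective dimension $i$. An $(n-1,n)$-flag is a pair $(A,B)$ with $A$ an $(n-1)$-space, $B$ an $n$-space and $A\subseteq B$; it "contains" $B$ if its $n$-space is $B$. Two such flags $(A_1,B_1),(A_2,B_2)$ are opposite if $A_1\cap B_2=A_2\cap B_1=\emptyset$. $\Gamma_{2n}$ is the graph whose vertices are the $(n-1,n)$-flags, adjacent when opposite; a maximal coclique is an inclusion-maximal set of pairwise non-opposite flags. $\begin{bmatrix}k\\ 1\end{bmatrix}_q=\frac{q^k-1}{q-1}$. *)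

theory Defs
  imports "HOL-Analysis.Analysis"
begin

text \<open>PG(2n,q) is modelled by the vector space 'a^'d with 'a a finite field of
order q and CARD('d) = 2n+1. A projective i-space is a linear subspace of
vector dimension i+1; projective subspaces are disjoint iff the linear
subspaces meet only in 0.\<close>

definition proj_space :: "nat \<Rightarrow> ('a::field ^ 'd) set \<Rightarrow> bool" where
  "proj_space i U \<longleftrightarrow> vec.subspace U \<and> vec.dim U = i + 1"

definition flags :: "nat \<Rightarrow> ((('a::field ^ 'd) set) \<times> (('a ^ 'd) set)) set" where
  "flags n = {(A, B). proj_space (n - 1) A \<and> proj_space n B \<and> A \<subseteq> B}"

definition opposite :: "(('a::field ^ 'd) set \<times> ('a ^ 'd) set) \<Rightarrow> (('a ^ 'd) set \<times> ('a ^ 'd) set) \<Rightarrow> bool" where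
  "opposite f g \<longleftrightarrow> fst f \<inter> snd g = {0} \<and> fst g \<inter> snd f = {0}"

definition coclique :: "nat \<Rightarrow> (('a::field ^ 'd) set \<times> ('a ^ 'd) set) set \<Rightarrow> bool" where
  "coclique n F \<longleftrightarrow> F \<subseteq> flags n \<and> (\<forall>f\<in>F. \<forall>g\<in>F. \<not> opposite f g)"

definition maximal_coclique :: "nat \<Rightarrow> (('a::field ^ 'd) set \<times> ('a ^ 'd) set) set \<Rightarrow> bool" where
  "maximal_coclique n F \<longleftrightarrow> coclique n F \<and> (\<forall>G. coclique n G \<and> F \<subseteq> G \<longrightarrow> G = F)"

definition gauss1 :: "nat \<Rightarrow> nat \<Rightarrow> nat" where
  "gauss1 q k = (q ^ k - 1) div (q - 1)"

end

theory Submission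
  imports Defs
begin


lemma card_subspace:
  fixes U :: "('a::{field,finite} ^ 'd) set"
  assumes "vec.subspace U"
  shows "card U = CARD('a) ^ vec.dim U"
proof -
  obtain Bs where Bs: "Bs \<subseteq> U" "vec.independent Bs" "U \<subseteq> vec.span Bs" "card Bs = vec.dim U"
    using vec.basis_exists[of U] by blast
  have fin: "finite Bs" using Bs(2) vec.finiteI_independent by blast
  have spanU: "vec.span Bs = U" using vec.span_subspace[OF Bs(1) Bs(3) assms] .
  define \<phi> where "\<phi> g = (\<Sum>v\<in>Bs. g v *s v)" for g :: "'a ^ 'd \<Rightarrow> 'a"
  have inj: "inj_on \<phi> (Bs \<rightarrow>\<^sub>E UNIV)"
  proof (rule inj_onI)
    fix g g' assume g: "g \<in> Bs \<rightarrow>\<^sub>E UNIV" and g': "g' \<in> Bs \<rightarrow>\<^sub>E UNIV" and eq: "\<phi> g = \<phi> g'"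
    have z: "(\<Sum>v\<in>Bs. (g v - g' v) *s v) = 0"
      using eq by (simp add: \<phi>_def vec.scale_left_diff_distrib sum_subtractf)
    have "\<forall>c. (\<Sum>v\<in>Bs. c v *s v) = 0 \<longrightarrow> (\<forall>v\<in>Bs. c v = 0)"
      using Bs(2) unfolding vec.independent_explicit by blast
    then have "(\<Sum>v\<in>Bs. (g v - g' v) *s v) = 0 \<longrightarrow> (\<forall>v\<in>Bs. g v - g' v = 0)"
      by (rule spec)
    then have "\<forall>v\<in>Bs. g v - g' v = 0"
      using z by blast
    then show "g = g'" using g g' by (auto simp: PiE_def extensional_def fun_eq_iff)
  qed
  have img: "\<phi> ` (Bs \<rightarrow>\<^sub>E UNIV) = U"
  proof
    show "\<phi> ` (Bs \<rightarrow>\<^sub>E UNIV) \<subseteq> U"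
      using vec.span_finite[OF fin] spanU by (auto simp: \<phi>_def)
  next
    show "U \<subseteq> \<phi> ` (Bs \<rightarrow>\<^sub>E UNIV)"
    proof
      fix x assume "x \<in> U"
      then obtain u where u: "x = (\<Sum>v\<in>Bs. u v *s v)" using vec.span_finite[OF fin] spanU by auto
      have "x = \<phi> (restrict u Bs)" unfolding u \<phi>_def by (intro sum.cong) auto
      then show "x \<in> \<phi> ` (Bs \<rightarrow>\<^sub>E UNIV)" by auto
    qed
  qed
  have "card U = card (Bs \<rightarrow>\<^sub>E (UNIV :: 'a set))"
    using card_image[OF inj] img by simp
  also have "\<dots> = CARD('a) ^ card Bs" using card_PiE[OF fin, of "\<lambda>_. UNIV :: 'a set"] by simp
  finally show ?thesis using Bs(4) by simp
qed

definition hypset :: "('a::field ^ 'd) set \<Rightarrow> ('a ^ 'd) set \<Rightarrow> ('a ^ 'd) set set" where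
  "hypset W B = {A. vec.subspace A \<and> vec.dim A + 1 = vec.dim B \<and> W \<subseteq> A \<and> A \<subseteq> B}"

lemma card_field_ge2: "CARD('a::{field,finite}) \<ge> 2"
proof -
  have "card {0::'a, 1} = 2" by simp
  moreover have "card {0::'a, 1} \<le> CARD('a)" by (rule card_mono) auto
  ultimately show ?thesis by simp
qed

lemma alg_step:
  fixes N r q P :: real
  assumes "q \<ge> 2" "P > 1" "r * (q - 1) = P - 1"
    and "N * (q * P - P) = (q * P - 1) * (N - r)"
  shows "N * (q - 1) = q * P - 1"
proof -
  have "N * (P - 1) = (q * P - 1) * r" using assms(4) by (simp add: algebra_simps)
  then have "N * (P - 1) * (q - 1) = (q * P - 1) * (P - 1)" using assms(3)
    by (metis mult.assoc mult.commute)
  then have "(N * (q - 1)) * (P - 1) = (q * P - 1) * (P - 1)" by (simp add: algebra_simps)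
  moreover have "P - 1 \<noteq> 0" using assms(2) by simp
  ultimately show ?thesis by simp
qed

lemma hyp_count:
  fixes W B :: "('a::{field,finite} ^ 'd) set"
  assumes "vec.subspace W" "vec.subspace B" "W \<subseteq> B"
  shows "real (card (hypset W B)) * (real CARD('a) - 1) = real CARD('a) ^ (vec.dim B - vec.dim W) - 1"
  using assms
proof (induction "vec.dim B - vec.dim W" arbitrary: W rule: less_induct)
  case less
  define q where "q = CARD('a)"
  have q2: "q \<ge> 2" unfolding q_def by (rule card_field_ge2)
  have finH: "finite (hypset W B)" by simp
  have wm: "vec.dim W \<le> vec.dim B" using vec.dim_subset[OF less.prems(3)] .
  consider "vec.dim B - vec.dim W = 0" | "vec.dim B - vec.dim W = 1" | "vec.dim B - vec.dim W \<ge> 2" by linarith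
  then show ?case
  proof cases
    case 1
    then have "W = B" using vec.subspace_dim_equal[OF less.prems] by simp
    then have "hypset W B = {}" unfolding hypset_def
      using vec.subspace_dim_equal by fastforce
    then show ?thesis using 1 by simp
  next
    case 2
    have "hypset W B = {W}"
    proof
      show "hypset W B \<subseteq> {W}"
      proof
        fix A assume "A \<in> hypset W B"
        then have A: "vec.subspace A" "vec.dim A + 1 = vec.dim B" "W \<subseteq> A" by (auto simp: hypset_def)
        then have "W = A" using vec.subspace_dim_equal[OF less.prems(1) A(1) A(3)] 2 wm by simp
        then show "A \<in> {W}" by simp
      qed
    next
      show "{W} \<subseteq> hypset W B" using less.prems 2 wm by (auto simp: hypset_def)
    qed
    then show ?thesis using 2 by (simp add: q_def)
  next
    case 3
    define m where "m = vec.dim B"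
    define w where "w = vec.dim W"
    define k where "k = m - w"
    define H where "H = hypset W B"
    define N where "N = card H"
    define r :: real where "r = (real q ^ (k - 1) - 1) / (real q - 1)"
    have k2: "k \<ge> 2" using 3 by (simp add: k_def m_def w_def)
    have mk: "m = w + k" using wm k2 by (simp add: k_def m_def w_def)
    have finB: "finite B" by simp
    have sub: "card {A \<in> H. x \<in> A} = card (hypset (vec.span (insert x W)) B)"
      and rr: "real (card {A \<in> H. x \<in> A}) = r"
      if x: "x \<in> B - W" for x
    proof -
      have xs: "x \<notin> vec.span W" using x vec.span_eq_iff less.prems(1) by blast
      have dW: "vec.dim (vec.span (insert x W)) = w + 1"
        using xs by (simp add: vec.dim_insert w_def)
      have sW: "vec.subspace (vec.span (insert x W))" by simp
      have sB: "vec.span (insert x W) \<subseteq> B"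
        using x less.prems vec.span_minimal by (metis DiffD1 insert_subset)
      have eq: "{A \<in> H. x \<in> A} = hypset (vec.span (insert x W)) B"
      proof -
        have "W \<subseteq> A \<and> x \<in> A \<longleftrightarrow> vec.span (insert x W) \<subseteq> A" if "vec.subspace A" for A
          using that vec.span_minimal vec.span_superset by (metis insert_subset order_trans)
        then show ?thesis unfolding H_def hypset_def by auto
      qed
      then show "card {A \<in> H. x \<in> A} = card (hypset (vec.span (insert x W)) B)" by simp
      have lt: "vec.dim B - vec.dim (vec.span (insert x W)) < vec.dim B - vec.dim W"
        using dW k2 by (simp add: k_def m_def w_def)
      have "real (card (hypset (vec.span (insert x W)) B)) * (real CARD('a) - 1)
            = real CARD('a) ^ (vec.dim B - vec.dim (vec.span (insert x W))) - 1"
        using less.hyps[OF lt sW less.prems(2) sB] .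
      then have "real (card (hypset (vec.span (insert x W)) B)) * (real q - 1) = real q ^ (k - 1) - 1"
        using dW by (simp add: q_def k_def m_def w_def)
      then show "real (card {A \<in> H. x \<in> A}) = r"
        using eq q2 by (simp add: r_def field_simps)
    qed
    \<comment> \<open>double counting\<close>
    have cardBA: "card (B - A) = q ^ m - q ^ (m - 1)" if "A \<in> H" for A
    proof -
      have A: "vec.subspace A" "vec.dim A + 1 = vec.dim B" "A \<subseteq> B" using that by (auto simp: H_def hypset_def)
      have "card (B - A) = card B - card A" using card_Diff_subset[OF _ A(3)] by simp
      also have "\<dots> = q ^ m - q ^ (m - 1)"
      proof -
        have "vec.dim A = vec.dim B - 1" using A(2) by simp
        then show ?thesis using card_subspace[OF A(1)] card_subspace[OF less.prems(2)]
          by (simp add: q_def m_def)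
      qed
      finally show ?thesis .
    qed
    have dc: "(\<Sum>A\<in>H. card (B - A)) = (\<Sum>x\<in>B - W. card {A \<in> H. x \<notin> A})"
    proof -
      have "(\<Sum>A\<in>H. card (B - A)) = (\<Sum>A\<in>H. \<Sum>x\<in>B - W. if x \<notin> A then 1 else 0)"
      proof (rule sum.cong[OF refl])
        fix A assume "A \<in> H"
        then have "W \<subseteq> A" by (auto simp: H_def hypset_def)
        then have "B - A = {x \<in> B - W. x \<notin> A}" by auto
        then show "card (B - A) = (\<Sum>x\<in>B - W. if x \<notin> A then 1 else 0)"
          by (simp add: sum.inter_filter[symmetric])
      qed
      also have "\<dots> = (\<Sum>x\<in>B - W. \<Sum>A\<in>H. if x \<notin> A then 1 else 0)"
        by (rule sum.swap)
      also have "\<dots> = (\<Sum>x\<in>B - W. card {A \<in> H. x \<notin> A})"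
        using finH by (simp add: sum.inter_filter[symmetric] H_def)
      finally show ?thesis .
    qed
    have split: "real (card {A \<in> H. x \<notin> A}) = real N - r" if "x \<in> B - W" for x
    proof -
      have fH: "finite H" using finH by (simp add: H_def)
      have e: "H = {A \<in> H. x \<in> A} \<union> {A \<in> H. x \<notin> A}" by blast
      have "card ({A \<in> H. x \<in> A} \<union> {A \<in> H. x \<notin> A}) = card {A \<in> H. x \<in> A} + card {A \<in> H. x \<notin> A}"
        by (rule card_Un_disjoint) (use fH in auto)
      then have "card H = card {A \<in> H. x \<in> A} + card {A \<in> H. x \<notin> A}" using e by simp
      then show ?thesis using rr[OF that] by (simp add: N_def)
    qed
    have cBW: "card (B - W) = q ^ m - q ^ w"
      using card_Diff_subset[OF _ less.prems(3)] card_subspace[OF less.prems(1)] card_subspace[OF less.prems(2)]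
      by (simp add: q_def m_def w_def)
    have qm: "q ^ (m - 1) \<le> q ^ m" "q ^ w \<le> q ^ m" using q2 mk k2 by (auto intro: power_increasing)
    have "real N * (real q ^ m - real q ^ (m - 1)) = (real q ^ m - real q ^ w) * (real N - r)"
    proof -
      have "real (\<Sum>A\<in>H. card (B - A)) = real N * (real q ^ m - real q ^ (m - 1))"
        using cardBA qm by (simp add: N_def of_nat_diff)
      moreover have "real (\<Sum>x\<in>B - W. card {A \<in> H. x \<notin> A}) = (real q ^ m - real q ^ w) * (real N - r)"
        using split cBW qm by (simp add: of_nat_diff)
      ultimately show ?thesis using dc by simp
    qed
    define P :: real where "P = real q ^ (k - 1)"
    have qk: "real q ^ k = real q * P" using k2 unfolding P_def
      by (metis Suc_diff_1 less_le_trans pos2 power_Suc)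
    have e1: "real q ^ m = real q ^ w * (real q * P)" using mk qk by (simp add: power_add)
    have e2: "real q ^ (m - 1) = real q ^ w * P" using mk k2 unfolding P_def
      by (simp add: power_add[symmetric])
    have "real q ^ w > 0" using q2 by simp
    have P1: "P > 1" unfolding P_def using q2 k2 by (simp add: one_less_power)
    have "real q ^ w * (real N * (real q * P - P)) = real q ^ w * ((real q * P - 1) * (real N - r))"
    proof -
      have "real q ^ w * (real N * (real q * P - P)) = real N * (real q ^ m - real q ^ (m - 1))"
        using e1 e2 by (simp add: algebra_simps)
      also have "\<dots> = (real q ^ m - real q ^ w) * (real N - r)" by fact
      also have "\<dots> = real q ^ w * ((real q * P - 1) * (real N - r))"
        using e1 by (simp add: algebra_simps)
      finally show ?thesis .
    qed
    then have eqN: "real N * (real q * P - P) = (real q * P - 1) * (real N - r)"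
      using \<open>real q ^ w > 0\<close> q2 by simp
    have rq: "r * (real q - 1) = P - 1" using q2 unfolding r_def P_def by simp
    have "real N * (real q - 1) = real q * P - 1"
      by (rule alg_step[OF _ P1 rq eqN]) (use q2 in simp)
    then show ?thesis using qk by (simp add: N_def H_def q_def k_def m_def w_def)
  qed
qed

lemma meet_pos:
  fixes B B' :: "('a::{field,finite} ^ 'd) set"
  assumes "proj_space n B" "proj_space n B'" "CARD('d) = 2 * n + 1"
  shows "\<not> (B \<inter> B' \<subseteq> {0})"
proof -
  have s: "vec.subspace B" "vec.subspace B'" "vec.dim B = n + 1" "vec.dim B' = n + 1"
    using assms by (auto simp: proj_space_def)
  have "vec.dim {x + y |x y. x \<in> B \<and> y \<in> B'} + vec.dim (B \<inter> B') = vec.dim B + vec.dim B'"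
    by (rule vec.dim_sums_Int[OF s(1) s(2)])
  moreover have "vec.dim {x + y |x y. x \<in> B \<and> y \<in> B'} \<le> 2 * n + 1"
    using dim_subset_UNIV_cart_gen[of "{x + y |x y. x \<in> B \<and> y \<in> B'}"] assms(3) by simp
  ultimately have "vec.dim (B \<inter> B') \<noteq> 0" using s by linarith
  then show ?thesis by simp
qed

lemma meet_le1:
  fixes A' B B' :: "('a::{field,finite} ^ 'd) set"
  assumes "proj_space (n - 1) A'" "proj_space n B'" "A' \<subseteq> B'" "vec.subspace B"
    "A' \<inter> B = {0}" "n \<ge> 1"
  shows "vec.dim (B \<inter> B') \<le> 1"
proof -
  have s: "vec.subspace A'" "vec.subspace B'" "vec.dim A' = n" "vec.dim B' = n + 1"
    using assms by (auto simp: proj_space_def)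
  have sI: "vec.subspace (B \<inter> B')" using assms(4) s(2) by (rule vec.subspace_inter)
  have "vec.dim {x + y |x y. x \<in> A' \<and> y \<in> B \<inter> B'} + vec.dim (A' \<inter> (B \<inter> B')) = vec.dim A' + vec.dim (B \<inter> B')"
    by (rule vec.dim_sums_Int[OF s(1) sI])
  moreover have "A' \<inter> (B \<inter> B') = {0}" using assms(3,5) by blast
  moreover have "{x + y |x y. x \<in> A' \<and> y \<in> B \<inter> B'} \<subseteq> B'"
  proof
    fix z assume "z \<in> {x + y |x y. x \<in> A' \<and> y \<in> B \<inter> B'}"
    then obtain x y where "z = x + y" "x \<in> A'" "y \<in> B'" by blast
    then show "z \<in> B'" using assms(3) vec.subspace_add[OF s(2)] by blast
  qed
  then have "vec.dim {x + y |x y. x \<in> A' \<and> y \<in> B \<inter> B'} \<le> vec.dim B'"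
    by (rule vec.dim_subset)
  ultimately show ?thesis using s(3) s(4) by simp
qed

lemma gauss1_mult:
  assumes "q \<ge> 2"
  shows "gauss1 q k * (q - 1) = q ^ k - 1"
proof -
  have "int q ^ k - 1 = (int q - 1) * (\<Sum>i<k. int q ^ i)" by (rule power_diff_1_eq)
  then have d: "(int q - 1) dvd (int q ^ k - 1)" by simp
  have "1 \<le> q ^ k" using assms by simp
  then have "int (q ^ k - 1) = int q ^ k - 1" by (simp add: of_nat_diff)
  moreover have "int (q - 1) = int q - 1" using assms by simp
  ultimately have "int (q - 1) dvd int (q ^ k - 1)" using d by simp
  then have "(q - 1) dvd (q ^ k - 1)" by (simp only: int_dvd_int_iff)
  then show ?thesis unfolding gauss1_def by simp
qed



theorem mainTheorem3:
  fixes F :: "(('a::{field,finite} ^ 'd) set \<times> ('a ^ 'd) set) set"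
    and n :: nat and B :: "('a ^ 'd) set"
  assumes "n \<ge> 2"
    and "CARD('d) = 2 * n + 1"
    and "maximal_coclique n F"
    and "B \<in> snd ` F"
  shows "(\<exists>k\<in>{1..n+1}. card {f \<in> F. snd f = B} = gauss1 CARD('a) k)
    \<and> (card {f \<in> F. snd f = B} = gauss1 CARD('a) (n + 1)
         \<longleftrightarrow> (\<forall>(A', B')\<in>F. A' \<inter> B \<noteq> {0}))"
proof -
  define q where "q = CARD('a)"
  have q2: "q \<ge> 2" unfolding q_def by (rule card_field_ge2)
  have cc: "coclique n F" and mx: "\<And>G. coclique n G \<Longrightarrow> F \<subseteq> G \<Longrightarrow> G = F"
    using assms(3) unfolding maximal_coclique_def by auto
  have Ffl: "F \<subseteq> flags n" and nopp: "\<And>f g. f \<in> F \<Longrightarrow> g \<in> F \<Longrightarrow> \<not> opposite f g"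
    using cc unfolding coclique_def by auto
  have flD: "proj_space (n - 1) (fst f) \<and> proj_space n (snd f) \<and> fst f \<subseteq> snd f" if "f \<in> F" for f
  proof -
    have "f \<in> flags n" using that Ffl by blast
    then show ?thesis by (cases f) (auto simp: flags_def)
  qed
  obtain A0 where A0: "(A0, B) \<in> F" using assms(4) by force
  have pB: "proj_space n B" using flD[OF A0] by simp
  have sB: "vec.subspace B" and dB: "vec.dim B = n + 1" using pB by (auto simp: proj_space_def)
  define F0 where "F0 = {f \<in> F. fst f \<inter> B = {0}}"
  define W where "W = vec.span (\<Union>f\<in>F0. B \<inter> snd f)"
  have sW: "vec.subspace W" unfolding W_def by simp
  have WB: "W \<subseteq> B" unfolding W_def using sB by (intro vec.span_minimal) auto
  have pos: "\<not> (B \<inter> snd f \<subseteq> {0})" if "f \<in> F" for f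
  proof -
    have "proj_space n (snd f)" using flD[OF that] by simp
    then show ?thesis by (rule meet_pos[OF pB _ assms(2)])
  qed
  have le1: "vec.dim (B \<inter> snd f) \<le> 1" if "f \<in> F0" for f
  proof -
    have "f \<in> F" "fst f \<inter> B = {0}" using that by (auto simp: F0_def)
    moreover have "proj_space (n - 1) (fst f)" "proj_space n (snd f)" "fst f \<subseteq> snd f"
      using flD[OF \<open>f \<in> F\<close>] by simp_all
    ultimately show ?thesis using meet_le1[of n "fst f" "snd f" B] sB assms(1) by simp
  qed
  have incl: "B \<inter> snd f \<subseteq> A" if "f \<in> F0" "(A, B) \<in> F" for f A
  proof -
    have fF: "f \<in> F" and f0: "fst f \<inter> B = {0}" using that(1) by (auto simp: F0_def)
    have "\<not> opposite (A, B) f" using nopp[OF that(2) fF] .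
    then have ne: "A \<inter> snd f \<noteq> {0}" using f0 by (auto simp: opposite_def)
    have pA: "vec.subspace A" "A \<subseteq> B" using flD[OF that(2)] by (auto simp: proj_space_def)
    have sf: "vec.subspace (snd f)" using flD[OF fF] by (auto simp: proj_space_def)
    have s1: "vec.subspace (A \<inter> snd f)" using pA(1) sf by (rule vec.subspace_inter)
    have s2: "vec.subspace (B \<inter> snd f)" using sB sf by (rule vec.subspace_inter)
    have "0 \<in> A \<inter> snd f" using s1 vec.subspace_0 by blast
    then have "\<not> (A \<inter> snd f \<subseteq> {0})" using ne by blast
    then have "vec.dim (A \<inter> snd f) \<noteq> 0" by simp
    then have "vec.dim (A \<inter> snd f) \<ge> vec.dim (B \<inter> snd f)" using le1[OF that(1)] by linarith
    moreover have "A \<inter> snd f \<subseteq> B \<inter> snd f" using pA(2) by blast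
    ultimately have "A \<inter> snd f = B \<inter> snd f" using vec.subspace_dim_equal[OF s1 s2] by blast
    then show ?thesis by blast
  qed
  have claim: "(A, B) \<in> F \<longleftrightarrow> A \<in> hypset W B" for A
  proof
    assume AB: "(A, B) \<in> F"
    have pA: "vec.subspace A" "vec.dim A = n" "A \<subseteq> B" using flD[OF AB] assms(1) by (auto simp: proj_space_def)
    have "W \<subseteq> A" unfolding W_def using incl[OF _ AB] pA(1) by (intro vec.span_minimal) auto
    then show "A \<in> hypset W B" using pA dB by (auto simp: hypset_def)
  next
    assume AH: "A \<in> hypset W B"
    have pA: "vec.subspace A" "vec.dim A = n" "W \<subseteq> A" "A \<subseteq> B" using AH dB by (auto simp: hypset_def)
    have flA: "(A, B) \<in> flags n" using pA pB assms(1) by (auto simp: flags_def proj_space_def)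
    have "vec.dim A \<noteq> 0" using pA(2) assms(1) by simp
    then have Anz: "\<not> (A \<subseteq> {0})" by simp
    have nAB: "\<not> opposite (A, B) g \<and> \<not> opposite g (A, B)" if "g \<in> F" for g
    proof (cases "fst g \<inter> B = {0}")
      case True
      then have "g \<in> F0" using that by (simp add: F0_def)
      then have "B \<inter> snd g \<subseteq> (\<Union>f\<in>F0. B \<inter> snd f)" by blast
      then have "B \<inter> snd g \<subseteq> W" unfolding W_def by (rule order_trans[OF _ vec.span_superset])
      then have "B \<inter> snd g \<subseteq> A \<inter> snd g" using pA(3) by blast
      then have "A \<inter> snd g \<noteq> {0}" using pos[OF that] by blast
      then show ?thesis by (auto simp: opposite_def)
    next
      case False
      then show ?thesis by (auto simp: opposite_def)
    qed
    have self: "\<not> opposite (A, B) (A, B)" using Anz pA(4) by (auto simp: opposite_def)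
    have "coclique n (insert (A, B) F)"
      unfolding coclique_def using Ffl flA nopp nAB self by auto
    then have "insert (A, B) F = F" using mx by blast
    then show "(A, B) \<in> F" by blast
  qed
  have cardeq: "card {f \<in> F. snd f = B} = card (hypset W B)"
  proof -
    have "{f \<in> F. snd f = B} = (\<lambda>A. (A, B)) ` hypset W B" using claim by force
    moreover have "inj_on (\<lambda>A. (A, B)) (hypset W B)" by (auto simp: inj_on_def)
    ultimately show ?thesis by (simp add: card_image)
  qed
  define w where "w = vec.dim W"
  have wle: "w \<le> n + 1" using vec.dim_subset[OF WB] dB by (simp add: w_def)
  have hc: "real (card (hypset W B)) * (real q - 1) = real q ^ (n + 1 - w) - 1"
    using hyp_count[OF sW sB WB] dB by (simp add: q_def w_def)
  have cg: "card {f \<in> F. snd f = B} = gauss1 q (n + 1 - w)"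
  proof -
    have "card (hypset W B) * (q - 1) = q ^ (n + 1 - w) - 1"
    proof -
      have "1 \<le> q ^ (n + 1 - w)" using q2 by simp
      then have "real (q ^ (n + 1 - w) - 1) = real q ^ (n + 1 - w) - 1" by (simp add: of_nat_diff)
      moreover have "real (card (hypset W B) * (q - 1)) = real (card (hypset W B)) * (real q - 1)"
        using q2 by (simp add: of_nat_diff)
      ultimately show ?thesis using hc by (metis of_nat_eq_iff)
    qed
    then have "card (hypset W B) * (q - 1) = gauss1 q (n + 1 - w) * (q - 1)"
      using gauss1_mult[OF q2] by simp
    then show ?thesis using cardeq q2 by simp
  qed
  have ginj: "gauss1 q a = gauss1 q b \<longleftrightarrow> a = b" for a b
  proof
    assume "gauss1 q a = gauss1 q b"
    then have "q ^ a - 1 = q ^ b - 1" using gauss1_mult[OF q2, of a] gauss1_mult[OF q2, of b] by simp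
    moreover have "1 \<le> q ^ a" "1 \<le> q ^ b" using q2 by simp_all
    ultimately have "q ^ a = q ^ b" by simp
    then show "a = b" using q2 by (simp add: power_inject_exp)
  qed simp
  have g0: "gauss1 q 0 = 0" by (simp add: gauss1_def)
  have nonempty: "card {f \<in> F. snd f = B} \<noteq> 0"
  proof -
    have "finite {f \<in> F. snd f = B}" by simp
    moreover have "(A0, B) \<in> {f \<in> F. snd f = B}" using A0 by simp
    ultimately show ?thesis by auto
  qed
  have kpos: "n + 1 - w \<ge> 1"
  proof (rule ccontr)
    assume "\<not> n + 1 - w \<ge> 1"
    then have "n + 1 - w = 0" by simp
    then show False using nonempty cg g0 by simp
  qed
  have part1: "\<exists>k\<in>{1..n+1}. card {f \<in> F. snd f = B} = gauss1 CARD('a) k"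
    using cg kpos by (intro bexI[of _ "n + 1 - w"]) (auto simp: q_def)
  have w0: "w = 0 \<longleftrightarrow> F0 = {}"
  proof
    assume "w = 0"
    then have "(\<Union>f\<in>F0. B \<inter> snd f) \<subseteq> {0}" unfolding w_def W_def by simp
    then have h: "\<And>f. f \<in> F0 \<Longrightarrow> B \<inter> snd f \<subseteq> {0}" by blast
    show "F0 = {}"
    proof (rule ccontr)
      assume "F0 \<noteq> {}"
      then obtain f where f: "f \<in> F0" by blast
      then have "f \<in> F" by (simp add: F0_def)
      then show False using pos h[OF f] by blast
    qed
  next
    assume "F0 = {}"
    then show "w = 0" unfolding w_def W_def by simp
  qed
  have "card {f \<in> F. snd f = B} = gauss1 CARD('a) (n + 1) \<longleftrightarrow> w = 0"
    using cg ginj wle by (auto simp: q_def)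
  also have "\<dots> \<longleftrightarrow> (\<forall>(A', B')\<in>F. A' \<inter> B \<noteq> {0})"
    using w0 by (auto simp: F0_def)
  finally show ?thesis using part1 by blast
qed

end
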